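(* Let $k$ be a field of characteristic zero, $n\ge1$, $S=k[x_1,\ldots,x_n]$, and $(S,L)$ a Lie–Rinehart algebra with $L$ a free $S$-module with basis $\alpha_1,\ldots,\alpha_n$ and enveloping algebra $U$. Let $p\ge1$ and $a=\sum_{|I|=p}f^I\alpha^I$ with $f^I\in S$ for $I\in\mathbb{N}^n$, $|I|=p$. If $k'\in\{1,\ldots,n\}$ and $J=(j_n,\ldots,j_1)\in\mathbb{N}^n$ has order $p-1$, then the coefficient of $\alpha^J$ in $[a,x_{k'}]$ (with respect to the left $S$-basis $\{\alpha^I\}$ of $U$) is $$\sum_{m=1}^n(j_m+1)\,\alpha_m(x_{k'})\,f^{J+e_m}.$$
   Context: $\alpha_m(x_{k'})$ denotes the action of $\alpha_m$ (through the anchor $L\to\operatorname{Der}(S)$) on $x_{k'}$; in $U$, $[\alpha,s]=\alpha(s)$. For $I=(i_n,\ldots,i_1)\in\mathbb{N}^n$, $\alpha^I=\alpha_n^{i_n}\cdots\alpha_1^{i_1}$ and $|I|=i_n+\cdots+i_1$ (its order); the $\alpha^I$ form a basis of $U$ as a left $S$-module. $e_m\in\mathbb{N}^n$ is the tuple with $1$ in the entry indexed by $m$ (the exponent of $\alpha_m$) and $0$ elsewhere. *)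

theory Defs
  imports "HOL-Library.Poly_Mapping"
begin

(* Polynomials: k[x_1,x_2,...] as finitely supported maps from monomials
   (exponent vectors nat =>0 nat) to coefficients; S = k[x_1..x_n] is the
   subset polys_in n of polynomials involving only x_1..x_n. *)
type_synonym 'k mpoly = "(nat \<Rightarrow>\<^sub>0 nat) \<Rightarrow>\<^sub>0 'k"

definition Var :: "nat \<Rightarrow> 'k::{zero,one} mpoly" where
  "Var i = Poly_Mapping.single (Poly_Mapping.single i 1) 1"

definition Const :: "'k::zero \<Rightarrow> 'k mpoly" where
  "Const c = Poly_Mapping.single 0 c"

definition polys_in :: "nat \<Rightarrow> 'k::zero mpoly set" where
  "polys_in n = {p. \<forall>mon \<in> Poly_Mapping.keys p. Poly_Mapping.keys mon \<subseteq> {1..n}}"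

definition is_kderiv :: "nat \<Rightarrow> ('k::field mpoly \<Rightarrow> 'k mpoly) \<Rightarrow> bool" where
  "is_kderiv n D \<longleftrightarrow>
     (\<forall>p \<in> polys_in n. D p \<in> polys_in n) \<and>
     (\<forall>p \<in> polys_in n. \<forall>q \<in> polys_in n. D (p + q) = D p + D q) \<and>
     (\<forall>c. \<forall>p \<in> polys_in n. D (Const c * p) = Const c * D p) \<and>
     (\<forall>p \<in> polys_in n. \<forall>q \<in> polys_in n. D (p * q) = p * D q + q * D p)"

(* multi-indices I = (i_n,...,i_1) in N^n, as functions vanishing outside {1..n} *)
definition idx :: "nat \<Rightarrow> (nat \<Rightarrow> nat) set" where
  "idx n = {I. \<forall>m. m \<notin> {1..n} \<longrightarrow> I m = 0}"

definition ord_idx :: "nat \<Rightarrow> (nat \<Rightarrow> nat) \<Rightarrow> nat" where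
  "ord_idx n I = (\<Sum>m = 1..n. I m)"

definition alpha_pow :: "nat \<Rightarrow> (nat \<Rightarrow> 'u::monoid_mult) \<Rightarrow> (nat \<Rightarrow> nat) \<Rightarrow> 'u" where
  "alpha_pow n \<alpha> I = prod_list (map (\<lambda>m. \<alpha> m ^ I m) (rev [1..<Suc n]))"

definition basis_rep ::
  "nat \<Rightarrow> ('k::field mpoly \<Rightarrow> 'u::ring_1) \<Rightarrow> (nat \<Rightarrow> 'u) \<Rightarrow> 'u \<Rightarrow> ((nat \<Rightarrow> nat) \<Rightarrow> 'k mpoly) \<Rightarrow> bool" where
  "basis_rep n \<iota> \<alpha> u f \<longleftrightarrow>
     (\<forall>I. f I \<in> polys_in n) \<and> (\<forall>I. I \<notin> idx n \<longrightarrow> f I = 0) \<and>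
     finite {I. f I \<noteq> 0} \<and>
     u = (\<Sum>I \<in> {I. f I \<noteq> 0}. \<iota> (f I) * alpha_pow n \<alpha> I)"

definition ucoeff ::
  "nat \<Rightarrow> ('k::field mpoly \<Rightarrow> 'u::ring_1) \<Rightarrow> (nat \<Rightarrow> 'u) \<Rightarrow> 'u \<Rightarrow> (nat \<Rightarrow> nat) \<Rightarrow> 'k mpoly" where
  "ucoeff n \<iota> \<alpha> u J = (THE f. basis_rep n \<iota> \<alpha> u f) J"

(* Data of a Lie-Rinehart algebra (S,L), S = k[x_1..x_n], L free over S with
   basis alpha_1..alpha_n, anchor alpha_m |-> delta m, structure constants
   [alpha_i,alpha_j] = sum_m c i j m alpha_m, together with its enveloping
   algebra U: iota : S -> U a ring map, alpha_m in U, the defining relations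
   of U, and the PBW property that {alpha^I} is a left S-basis of U. *)
definition LR_envelope ::
  "nat \<Rightarrow> ('k::field mpoly \<Rightarrow> 'u::ring_1) \<Rightarrow> (nat \<Rightarrow> 'u)
   \<Rightarrow> (nat \<Rightarrow> 'k mpoly \<Rightarrow> 'k mpoly) \<Rightarrow> (nat \<Rightarrow> nat \<Rightarrow> nat \<Rightarrow> 'k mpoly) \<Rightarrow> bool" where
  "LR_envelope n \<iota> \<alpha> \<delta> c \<longleftrightarrow>
     \<comment> \<open>iota is a ring homomorphism S -> U\<close>
     \<iota> 1 = 1 \<and>
     (\<forall>p \<in> polys_in n. \<forall>q \<in> polys_in n. \<iota> (p + q) = \<iota> p + \<iota> q) \<and>
     (\<forall>p \<in> polys_in n. \<forall>q \<in> polys_in n. \<iota> (p * q) = \<iota> p * \<iota> q) \<and>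
     \<comment> \<open>anchor: each alpha_m acts on S by a k-derivation\<close>
     (\<forall>m \<in> {1..n}. is_kderiv n (\<delta> m)) \<and>
     \<comment> \<open>Lie bracket of L on the basis, antisymmetric, anchor is a Lie map\<close>
     (\<forall>i j m. c i j m \<in> polys_in n) \<and>
     (\<forall>i \<in> {1..n}. \<forall>j \<in> {1..n}. \<forall>m. c i j m = - c j i m) \<and>
     (\<forall>i \<in> {1..n}. \<forall>j \<in> {1..n}. \<forall>s \<in> polys_in n.
        \<delta> i (\<delta> j s) - \<delta> j (\<delta> i s) = (\<Sum>m = 1..n. c i j m * \<delta> m s)) \<and>
     \<comment> \<open>relations in U\<close>
     (\<forall>m \<in> {1..n}. \<forall>s \<in> polys_in n. \<alpha> m * \<iota> s - \<iota> s * \<alpha> m = \<iota> (\<delta> m s)) \<and>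
     (\<forall>i \<in> {1..n}. \<forall>j \<in> {1..n}.
        \<alpha> i * \<alpha> j - \<alpha> j * \<alpha> i = (\<Sum>m = 1..n. \<iota> (c i j m) * \<alpha> m)) \<and>
     \<comment> \<open>PBW: {alpha^I} is a left S-basis of U\<close>
     (\<forall>u. \<exists>!f. basis_rep n \<iota> \<alpha> u f)"

end

theory Submission
  imports Defs
begin



lemma polys_in_0[simp]: "0 \<in> polys_in n" by (simp add: polys_in_def)
lemma polys_in_add[intro]:
  fixes p q :: "'k::comm_ring_1 mpoly"
  assumes "p \<in> polys_in n" "q \<in> polys_in n" shows "p + q \<in> polys_in n"
  using assms keys_add[of p q] unfolding polys_in_def by blast
lemma polys_in_uminus[intro]:
  fixes p :: "'k::comm_ring_1 mpoly"
  assumes "p \<in> polys_in n" shows "- p \<in> polys_in n"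
  using assms unfolding polys_in_def by simp
lemma polys_in_diff[intro]:
  fixes p q :: "'k::comm_ring_1 mpoly"
  assumes "p \<in> polys_in n" "q \<in> polys_in n" shows "p - q \<in> polys_in n"
  using assms keys_diff[of p q] unfolding polys_in_def by blast
lemma polys_in_one[simp]: "(1::'k::comm_ring_1 mpoly) \<in> polys_in n" by (simp add: polys_in_def)
lemma polys_in_mult[intro]:
  fixes p q :: "'k::comm_ring_1 mpoly"
  assumes p: "p \<in> polys_in n" and q: "q \<in> polys_in n"
  shows "p * q \<in> polys_in n"
  unfolding polys_in_def
proof safe
  fix mon :: "nat \<Rightarrow>\<^sub>0 nat" and x assume m: "mon \<in> Poly_Mapping.keys (p*q)" and x: "x \<in> Poly_Mapping.keys mon"
  from keys_mult m obtain a b where "mon = a + b" "a \<in> Poly_Mapping.keys p" "b \<in> Poly_Mapping.keys q" by blast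
  then show "x \<in> {1..n}" using keys_add[of a b] p q x unfolding polys_in_def by blast
qed
lemma polys_in_of_nat[intro]: "(of_nat k :: 'k::comm_ring_1 mpoly) \<in> polys_in n"
  by (induction k) auto
lemma polys_in_Var: "k \<in> {1..n} \<Longrightarrow> (Var k :: 'k::comm_ring_1 mpoly) \<in> polys_in n"
  by (simp add: polys_in_def Var_def)

definition apk :: "(nat \<Rightarrow> 'u::monoid_mult) \<Rightarrow> nat \<Rightarrow> (nat \<Rightarrow> nat) \<Rightarrow> 'u" where
  "apk \<alpha> i K = prod_list (map (\<lambda>m. \<alpha> m ^ K m) (rev [1..<Suc i]))"

lemma apk_0[simp]: "apk \<alpha> 0 K = 1" by (simp add: apk_def)
lemma apk_Suc: "apk \<alpha> (Suc i) K = \<alpha> (Suc i) ^ K (Suc i) * apk \<alpha> i K"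
  by (simp add: apk_def)
lemma alpha_pow_apk: "alpha_pow n \<alpha> K = apk \<alpha> n K"
  by (simp add: alpha_pow_def apk_def)
lemma apk_cong: "(\<forall>l. 1 \<le> l \<and> l \<le> i \<longrightarrow> K l = K' l) \<Longrightarrow> apk \<alpha> i K = apk \<alpha> i K'"
  by (induction i) (auto simp: apk_Suc)
lemma apk_zero: "(\<forall>l. 1 \<le> l \<and> l \<le> i \<longrightarrow> K l = 0) \<Longrightarrow> apk \<alpha> i K = 1"
  by (induction i) (auto simp: apk_Suc)
lemma apk_step: "1 \<le> m \<Longrightarrow> m \<le> i \<Longrightarrow> (\<forall>l. m < l \<and> l \<le> i \<longrightarrow> K l = 0) \<Longrightarrow>
   apk \<alpha> i (K(m := K m + 1)) = \<alpha> m * apk \<alpha> i K"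
proof (induction i)
  case 0 then show ?case by simp
next
  case (Suc i)
  show ?case
  proof (cases "m = Suc i")
    case True
    have "apk \<alpha> i (K(m := K m + 1)) = apk \<alpha> i K" by (rule apk_cong) (use True in auto)
    then show ?thesis using True by (simp add: apk_Suc mult.assoc fun_upd_def)
  next
    case False
    then have "m \<le> i" "K (Suc i) = 0" using Suc.prems by auto
    then show ?thesis using Suc False by (simp add: apk_Suc)
  qed
qed




locale LR =
  fixes n :: nat and \<iota> :: "'k::field_char_0 mpoly \<Rightarrow> 'u::ring_1" and \<alpha> :: "nat \<Rightarrow> 'u"
    and \<delta> :: "nat \<Rightarrow> 'k mpoly \<Rightarrow> 'k mpoly" and c :: "nat \<Rightarrow> nat \<Rightarrow> nat \<Rightarrow> 'k mpoly"
  assumes env: "LR_envelope n \<iota> \<alpha> \<delta> c"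
begin

abbreviation "P \<equiv> polys_in n :: 'k mpoly set"
abbreviation "ap \<equiv> alpha_pow n \<alpha>"
definition "rep u = (THE f. basis_rep n \<iota> \<alpha> u f)"

lemma iota_one: "\<iota> 1 = 1" using env by (simp add: LR_envelope_def)
lemma iota_add: "p \<in> P \<Longrightarrow> q \<in> P \<Longrightarrow> \<iota> (p + q) = \<iota> p + \<iota> q"
  using env by (simp add: LR_envelope_def)
lemma iota_mult: "p \<in> P \<Longrightarrow> q \<in> P \<Longrightarrow> \<iota> (p * q) = \<iota> p * \<iota> q"
  using env by (simp add: LR_envelope_def)
lemma iota_0[simp]: "\<iota> 0 = 0"
  using iota_add[of 0 0] by simp
lemma iota_uminus: "p \<in> P \<Longrightarrow> \<iota> (- p) = - \<iota> p"
  using iota_add[of p "-p"] by (simp add: add_eq_0_iff polys_in_uminus)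
lemma iota_diff: "p \<in> P \<Longrightarrow> q \<in> P \<Longrightarrow> \<iota> (p - q) = \<iota> p - \<iota> q"
  using iota_add[of p "-q"] iota_uminus[of q] by (simp add: polys_in_uminus)
lemma deriv: "m \<in> {1..n} \<Longrightarrow> is_kderiv n (\<delta> m)"
  using env by (simp add: LR_envelope_def)
lemma delta_P: "m \<in> {1..n} \<Longrightarrow> s \<in> P \<Longrightarrow> \<delta> m s \<in> P"
  using deriv unfolding is_kderiv_def by blast
lemma delta_0: "m \<in> {1..n} \<Longrightarrow> \<delta> m 0 = 0"
proof -
  assume m: "m \<in> {1..n}"
  have "\<forall>p\<in>P. \<forall>q\<in>P. \<delta> m (p + q) = \<delta> m p + \<delta> m q" using deriv[OF m] unfolding is_kderiv_def by blast
  then have "\<delta> m (0 + 0) = \<delta> m 0 + \<delta> m 0" using polys_in_0[of n] by blast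
  then show ?thesis by simp
qed
lemma c_P: "c i j l \<in> P"
  using env by (simp add: LR_envelope_def)
lemma comm_rel: "m \<in> {1..n} \<Longrightarrow> s \<in> P \<Longrightarrow> \<alpha> m * \<iota> s = \<iota> s * \<alpha> m + \<iota> (\<delta> m s)"
proof -
  assume a: "m \<in> {1..n}" "s \<in> P"
  have "\<alpha> m * \<iota> s - \<iota> s * \<alpha> m = \<iota> (\<delta> m s)" using env a unfolding LR_envelope_def by blast
  then show ?thesis by (simp add: algebra_simps)
qed
lemma lie_rel: "i \<in> {1..n} \<Longrightarrow> j \<in> {1..n} \<Longrightarrow>
   \<alpha> i * \<alpha> j = \<alpha> j * \<alpha> i + (\<Sum>l = 1..n. \<iota> (c i j l) * \<alpha> l)"
proof -
  assume a: "i \<in> {1..n}" "j \<in> {1..n}"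
  have "\<alpha> i * \<alpha> j - \<alpha> j * \<alpha> i = (\<Sum>l = 1..n. \<iota> (c i j l) * \<alpha> l)" using env a unfolding LR_envelope_def by blast
  then show ?thesis by (simp add: algebra_simps)
qed
lemma pbw: "\<exists>!f. basis_rep n \<iota> \<alpha> u f"
  using env by (simp add: LR_envelope_def)

lemma rep_basis: "basis_rep n \<iota> \<alpha> u (rep u)"
  unfolding rep_def using pbw[of u] by (rule theI')

lemma rep_P: "rep u I \<in> P" using rep_basis[of u] by (simp add: basis_rep_def)
lemma rep_idx: "I \<notin> idx n \<Longrightarrow> rep u I = 0" using rep_basis[of u] by (simp add: basis_rep_def)
lemma rep_fin: "finite {I. rep u I \<noteq> 0}" using rep_basis[of u] by (simp add: basis_rep_def)

lemma rep_expand: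
  assumes "finite S" "{I. rep u I \<noteq> 0} \<subseteq> S"
  shows "u = (\<Sum>I\<in>S. \<iota> (rep u I) * ap I)"
proof -
  have "u = (\<Sum>I\<in>{I. rep u I \<noteq> 0}. \<iota> (rep u I) * ap I)"
    using rep_basis[of u] by (simp add: basis_rep_def)
  also have "\<dots> = (\<Sum>I\<in>S. \<iota> (rep u I) * ap I)"
    by (rule sum.mono_neutral_left) (use assms in auto)
  finally show ?thesis .
qed

lemma rep_eqI:
  assumes "\<And>I. f I \<in> P" "\<And>I. I \<notin> idx n \<Longrightarrow> f I = 0" "finite S" "{I. f I \<noteq> 0} \<subseteq> S"
    "u = (\<Sum>I\<in>S. \<iota> (f I) * ap I)"
  shows "rep u = f"
proof -
  have fin: "finite {I. f I \<noteq> 0}" using assms(3,4) finite_subset by blast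
  have "u = (\<Sum>I\<in>{I. f I \<noteq> 0}. \<iota> (f I) * ap I)"
    unfolding assms(5) by (rule sum.mono_neutral_right) (use assms in auto)
  then have "basis_rep n \<iota> \<alpha> u f" using assms fin unfolding basis_rep_def by blast
  then show ?thesis using pbw[of u] rep_basis[of u] by blast
qed

lemma rep_zero: "rep 0 = (\<lambda>_. 0)"
  by (rule rep_eqI[where S="{}"]) auto

lemma rep_add: "rep (u + v) = (\<lambda>I. rep u I + rep v I)"
proof (rule rep_eqI[where S="{I. rep u I \<noteq> 0} \<union> {I. rep v I \<noteq> 0}"])
  let ?S = "{I. rep u I \<noteq> 0} \<union> {I. rep v I \<noteq> 0}"
  show "finite ?S" using rep_fin by auto
  show "u + v = (\<Sum>I\<in>?S. \<iota> (rep u I + rep v I) * ap I)"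
    using rep_expand[of ?S u] rep_expand[of ?S v] rep_fin
    by (simp add: iota_add rep_P distrib_right sum.distrib)
qed (auto simp: rep_P rep_idx)

lemma rep_lmult: "h \<in> P \<Longrightarrow> rep (\<iota> h * u) = (\<lambda>I. h * rep u I)"
proof (rule rep_eqI[where S="{I. rep u I \<noteq> 0}"])
  assume h: "h \<in> P"
  let ?S = "{I. rep u I \<noteq> 0}"
  show "\<iota> h * u = (\<Sum>I\<in>?S. \<iota> (h * rep u I) * ap I)"
  proof -
    have e: "u = (\<Sum>I\<in>?S. \<iota> (rep u I) * ap I)" by (rule rep_expand) (use rep_fin in auto)
    have "\<iota> h * u = \<iota> h * (\<Sum>I\<in>?S. \<iota> (rep u I) * ap I)" using e by (rule arg_cong)
    also have "\<dots> = (\<Sum>I\<in>?S. \<iota> h * (\<iota> (rep u I) * ap I))" by (rule sum_distrib_left)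
    also have "\<dots> = (\<Sum>I\<in>?S. \<iota> (h * rep u I) * ap I)"
      using h by (simp add: iota_mult rep_P mult.assoc)
    finally show ?thesis .
  qed
qed (auto simp: rep_P rep_idx rep_fin)

lemma rep_uminus: "rep (- u) = (\<lambda>I. - rep u I)"
proof -
  have "- u = \<iota> (-1) * u" using iota_uminus[of 1] iota_one by simp
  then show ?thesis using rep_lmult[of "-1" u] by (simp add: polys_in_uminus)
qed

lemma rep_diff: "rep (u - v) = (\<lambda>I. rep u I - rep v I)"
  using rep_add[of u "-v"] rep_uminus[of v] by simp

lemma rep_mono: "g \<in> P \<Longrightarrow> K \<in> idx n \<Longrightarrow> rep (\<iota> g * ap K) = (\<lambda>I. if I = K then g else 0)"
  by (rule rep_eqI[where S="{K}"]) auto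

lemma rep_sum: "finite A \<Longrightarrow> rep (\<Sum>i\<in>A. u i) = (\<lambda>I. \<Sum>i\<in>A. rep (u i) I)"
  by (induction A rule: finite_induct) (auto simp: rep_zero rep_add)

lemma rep_eq_0: "rep u = (\<lambda>_. 0) \<Longrightarrow> u = 0"
  using rep_expand[of "{}" u] by simp

end



lemma idx_upd: "K \<in> idx n \<Longrightarrow> m \<in> {1..n} \<Longrightarrow> K(m := x) \<in> idx n"
  by (auto simp: idx_def)

lemma ord_inc: "m \<in> {1..n} \<Longrightarrow> ord_idx n (K(m := K m + 1)) = ord_idx n K + 1"
proof -
  assume m: "m \<in> {1..n}"
  have "ord_idx n (K(m := K m + 1)) = (\<Sum>l = 1..n. K l + (if l = m then 1 else 0))"
    unfolding ord_idx_def by (rule sum.cong) auto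
  also have "\<dots> = ord_idx n K + 1" using m by (simp add: sum.distrib ord_idx_def)
  finally show ?thesis .
qed

lemma ord_dec: "m \<in> {1..n} \<Longrightarrow> K m > 0 \<Longrightarrow> ord_idx n (K(m := K m - 1)) + 1 = ord_idx n K"
proof -
  assume m: "m \<in> {1..n}" "K m > 0"
  have "(K(m := K m - 1))(m := (K(m := K m - 1)) m + 1) = K" using m by auto
  then show ?thesis using ord_inc[OF m(1), of "K(m := K m - 1)"] by simp
qed

lemma ord_zero: "K \<in> idx n \<Longrightarrow> ord_idx n K = 0 \<Longrightarrow> K l = 0"
  by (cases "l \<in> {1..n}") (auto simp: idx_def ord_idx_def)

lemma top_idx:
  assumes "K \<in> idx n" "K l > 0"
  shows "\<exists>j\<in>{1..n}. K j > 0 \<and> (\<forall>l>j. K l = 0)"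
proof -
  let ?A = "{l\<in>{1..n}. K l > 0}"
  have l: "l \<in> ?A" using assms by (auto simp: idx_def)
  have fin: "finite ?A" by simp
  define j where "j = Max ?A"
  have j: "j \<in> ?A" unfolding j_def using Max_in[OF fin] l by blast
  have "\<forall>l'>j. K l' = 0"
  proof (intro allI impI)
    fix l' assume "l' > j"
    show "K l' = 0"
    proof (rule ccontr)
      assume "K l' \<noteq> 0"
      then have "l' \<in> ?A" using assms(1) by (auto simp: idx_def)
      then have "l' \<le> j" unfolding j_def using fin by simp
      then show False using \<open>l' > j\<close> by simp
    qed
  qed
  then show ?thesis using j by blast
qed

lemma finite_ord_set: "finite {I \<in> idx n. ord_idx n I = p}"
proof -
  have "{I \<in> idx n. ord_idx n I = p} \<subseteq> {f. \<forall>x. (x \<in> {1..n} \<longrightarrow> f x \<in> {0..p}) \<and> (x \<notin> {1..n} \<longrightarrow> f x = 0)}"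
  proof safe
    fix I x assume "I \<in> idx n" "x \<in> {1..n}"
    then show "I x \<in> {0..ord_idx n I}" unfolding ord_idx_def
      by (simp add: member_le_sum)
  qed (auto simp: idx_def)
  moreover have "finite {f. \<forall>x. (x \<in> {1..n} \<longrightarrow> f x \<in> {0..p}) \<and> (x \<notin> {1..n} \<longrightarrow> f x = (0::nat))}"
    by (rule finite_set_of_finite_funs) auto
  ultimately show ?thesis by (rule finite_subset)
qed

context LR begin

lemma ap_step: "m \<in> {1..n} \<Longrightarrow> (\<forall>l>m. K l = 0) \<Longrightarrow> ap (K(m := K m + 1)) = \<alpha> m * ap K"
  unfolding alpha_pow_apk by (rule apk_step) auto

lemma ap_zero: "K \<in> idx n \<Longrightarrow> ord_idx n K = 0 \<Longrightarrow> ap K = 1"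
  unfolding alpha_pow_apk by (rule apk_zero) (auto intro: ord_zero)

definition "Q q = {u. \<forall>I. q \<le> ord_idx n I \<longrightarrow> rep u I = 0}"

lemma Q_zero[simp]: "0 \<in> Q q" by (simp add: Q_def rep_zero)
lemma Q_add: "u \<in> Q q \<Longrightarrow> v \<in> Q q \<Longrightarrow> u + v \<in> Q q" by (simp add: Q_def rep_add)
lemma Q_diff: "u \<in> Q q \<Longrightarrow> v \<in> Q q \<Longrightarrow> u - v \<in> Q q" by (simp add: Q_def rep_diff)
lemma Q_lmult: "h \<in> P \<Longrightarrow> u \<in> Q q \<Longrightarrow> \<iota> h * u \<in> Q q" by (simp add: Q_def rep_lmult)
lemma Q_sum: "(\<And>i. i \<in> A \<Longrightarrow> u i \<in> Q q) \<Longrightarrow> (\<Sum>i\<in>A. u i) \<in> Q q"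
  by (induction A rule: infinite_finite_induct) (auto intro: Q_add)
lemma Q_mono: "q \<le> q' \<Longrightarrow> u \<in> Q q \<Longrightarrow> u \<in> Q q'" by (simp add: Q_def)
lemma Q_mono_in: "g \<in> P \<Longrightarrow> K \<in> idx n \<Longrightarrow> ord_idx n K < q \<Longrightarrow> \<iota> g * ap K \<in> Q q"
  by (auto simp: Q_def rep_mono)
lemma Q_0_eq: "u \<in> Q 0 \<Longrightarrow> u = 0"
  by (rule rep_eq_0) (auto simp: Q_def)
lemma ap_in_Q: "K \<in> idx n \<Longrightarrow> ord_idx n K < q \<Longrightarrow> ap K \<in> Q q"
  using Q_mono_in[of 1 K q] iota_one by simp

end


context LR begin

lemma alpha_Q:
  assumes H: "\<And>K m. K \<in> idx n \<Longrightarrow> ord_idx n K < q \<Longrightarrow> m \<in> {1..n} \<Longrightarrow> \<alpha> m * ap K \<in> Q (ord_idx n K + 2)"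
    and j: "j \<in> {1..n}" and u: "u \<in> Q q"
  shows "\<alpha> j * u \<in> Q (q+1)"
proof -
  let ?S = "{I. rep u I \<noteq> 0}"
  have e: "u = (\<Sum>I\<in>?S. \<iota> (rep u I) * ap I)" by (rule rep_expand) (use rep_fin in auto)
  have "\<alpha> j * u = \<alpha> j * (\<Sum>I\<in>?S. \<iota> (rep u I) * ap I)" using e by (rule arg_cong)
  also have "\<dots> = (\<Sum>I\<in>?S. \<alpha> j * (\<iota> (rep u I) * ap I))" by (rule sum_distrib_left)
  also have "\<dots> = (\<Sum>I\<in>?S. \<iota> (rep u I) * (\<alpha> j * ap I) + \<iota> (\<delta> j (rep u I)) * ap I)"
  proof (rule sum.cong)
    fix I
    have "\<alpha> j * (\<iota> (rep u I) * ap I) = (\<alpha> j * \<iota> (rep u I)) * ap I" by (simp add: mult.assoc)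
    also have "\<dots> = (\<iota> (rep u I) * \<alpha> j + \<iota> (\<delta> j (rep u I))) * ap I" using comm_rel[OF j rep_P] by simp
    also have "\<dots> = \<iota> (rep u I) * (\<alpha> j * ap I) + \<iota> (\<delta> j (rep u I)) * ap I" by (simp add: algebra_simps)
    finally show "\<alpha> j * (\<iota> (rep u I) * ap I) = \<iota> (rep u I) * (\<alpha> j * ap I) + \<iota> (\<delta> j (rep u I)) * ap I" .
  qed simp
  also have "\<dots> \<in> Q (q+1)"
  proof (rule Q_sum)
    fix I assume "I \<in> ?S"
    then have I: "I \<in> idx n" "ord_idx n I < q" using rep_idx u unfolding Q_def by (auto simp: not_le[symmetric])
    have 1: "\<iota> (rep u I) * (\<alpha> j * ap I) \<in> Q (q+1)"
      using Q_lmult[OF rep_P H[OF I j]] I(2) Q_mono[of "ord_idx n I + 2" "q+1"] by auto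
    have 2: "\<iota> (\<delta> j (rep u I)) * ap I \<in> Q (q+1)"
      using Q_mono_in[OF delta_P[OF j rep_P] I(1)] I(2) by simp
    show "\<iota> (rep u I) * (\<alpha> j * ap I) + \<iota> (\<delta> j (rep u I)) * ap I \<in> Q (q+1)" using Q_add[OF 1 2] .
  qed
  finally show ?thesis .
qed

lemma R: "\<forall>K\<in>idx n. ord_idx n K = d \<longrightarrow> (\<forall>m\<in>{1..n}. \<alpha> m * ap K - ap (K(m := K m + 1)) \<in> Q (d+1))"
proof (induction d rule: less_induct)
  case (less d)
  have R': "\<alpha> m * ap K \<in> Q (ord_idx n K + 2)"
    if K: "K \<in> idx n" "ord_idx n K < d" "m \<in> {1..n}" for K m
  proof -
    have "\<alpha> m * ap K - ap (K(m:=K m+1)) \<in> Q (ord_idx n K + 1)" using less.IH[of "ord_idx n K"] K by blast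
    then have 1: "\<alpha> m * ap K - ap (K(m:=K m+1)) \<in> Q (ord_idx n K + 2)" by (rule Q_mono[rotated]) simp
    have 2: "ap (K(m:=K m+1)) \<in> Q (ord_idx n K + 2)" by (rule ap_in_Q) (use K ord_inc[OF K(3), of K] in \<open>auto simp: idx_upd\<close>)
    from Q_add[OF 1 2] show ?thesis by simp
  qed
  show ?case
  proof (intro ballI impI)
    fix K m assume K: "K \<in> idx n" and d: "ord_idx n K = d" and m: "m \<in> {1..n}"
    show "\<alpha> m * ap K - ap (K(m := K m + 1)) \<in> Q (d+1)"
    proof (cases "\<forall>l>m. K l = 0")
      case True then show ?thesis using ap_step[OF m True] by simp
    next
      case False
      then obtain l where l: "l > m" "K l > 0" by auto
      obtain j where j: "j \<in> {1..n}" "K j > 0" "\<forall>l>j. K l = 0" using top_idx[OF K l(2)] by blast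
      have mj: "m < j"
      proof (rule ccontr)
        assume "\<not> m < j" then have "l > j" using l by simp
        then show False using j(3) l by auto
      qed
      define K0 where "K0 = K(j := K j - 1)"
      have K0: "K0 \<in> idx n" using K j by (simp add: K0_def idx_upd)
      have dK0: "ord_idx n K0 + 1 = d" using ord_dec[of j n K] j d by (simp add: K0_def)
      have K0top: "\<forall>l>j. K0 l = 0" using j(3) by (simp add: K0_def)
      have KK0: "K0(j := K0 j + 1) = K" using j(2) by (auto simp: K0_def)
      have apK: "ap K = \<alpha> j * ap K0" using ap_step[OF j(1) K0top] KK0 by simp
      define K1 where "K1 = K0(m := K0 m + 1)"
      have K1top: "\<forall>l>j. K1 l = 0" using K0top mj by (simp add: K1_def)
      have K1K: "K1(j := K1 j + 1) = K(m := K m + 1)"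
        by (rule ext) (use mj j(2) in \<open>auto simp: K1_def K0_def\<close>)
      have ap1: "\<alpha> j * ap K1 = ap (K(m := K m + 1))" using ap_step[OF j(1) K1top] K1K by simp
      define E where "E = \<alpha> m * ap K0 - ap K1"
      have lt: "ord_idx n K0 < d" using dK0 by simp
      have "\<alpha> m * ap K0 - ap K1 \<in> Q (ord_idx n K0 + 1)" using less.IH[OF lt] K0 m unfolding K1_def by blast
      then have E: "E \<in> Q d" using dK0 by (simp add: E_def)
      have jE: "\<alpha> j * E \<in> Q (d+1)"
        by (rule alpha_Q[OF _ j(1) E]) (rule R'; assumption)
      have lie: "\<alpha> m * \<alpha> j = \<alpha> j * \<alpha> m + (\<Sum>l = 1..n. \<iota> (c m j l) * \<alpha> l)" using lie_rel m j(1) by blast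
      have "\<alpha> m * ap K - ap (K(m:=K m+1)) = \<alpha> m * \<alpha> j * ap K0 - \<alpha> j * ap K1" using apK ap1 by (simp add: mult.assoc)
      also have "\<dots> = \<alpha> j * E + (\<Sum>l = 1..n. \<iota> (c m j l) * (\<alpha> l * ap K0))"
        unfolding lie E_def by (simp add: algebra_simps sum_distrib_right)
      also have "\<dots> \<in> Q (d+1)"
      proof (rule Q_add[OF jE Q_sum])
        fix l assume l: "l \<in> {1..n}"
        have "\<alpha> l * ap K0 \<in> Q (ord_idx n K0 + 2)" by (rule R') (use K0 dK0 l in auto)
        then show "\<iota> (c m j l) * (\<alpha> l * ap K0) \<in> Q (d+1)" using dK0 c_P Q_lmult by auto
      qed
      finally show ?thesis .
    qed
  qed
qed

lemma alpha_ap_Q: "K \<in> idx n \<Longrightarrow> m \<in> {1..n} \<Longrightarrow> \<alpha> m * ap K \<in> Q (ord_idx n K + 2)"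
proof -
  assume K: "K \<in> idx n" and m: "m \<in> {1..n}"
  have "\<alpha> m * ap K - ap (K(m:=K m+1)) \<in> Q (ord_idx n K + 1)" using R K m by blast
  then have 1: "\<alpha> m * ap K - ap (K(m:=K m+1)) \<in> Q (ord_idx n K + 2)" by (rule Q_mono[rotated]) simp
  have 2: "ap (K(m:=K m+1)) \<in> Q (ord_idx n K + 2)" by (rule ap_in_Q) (use K m ord_inc[OF m, of K] in \<open>auto simp: idx_upd\<close>)
  from Q_add[OF 1 2] show ?thesis by simp
qed

lemma alpha_Q_gen: "j \<in> {1..n} \<Longrightarrow> u \<in> Q q \<Longrightarrow> \<alpha> j * u \<in> Q (q+1)"
  using alpha_Q[of q j u] alpha_ap_Q by blast

end


context LR begin

definition "main I s = (\<Sum>m = 1..n. \<iota> (of_nat (I m) * \<delta> m s) * ap (I(m := I m - 1)))"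

lemma C: "s \<in> P \<Longrightarrow> \<forall>I\<in>idx n. ord_idx n I = d \<longrightarrow> ap I * \<iota> s - \<iota> s * ap I - main I s \<in> Q (d - 1)"
proof (induction d)
  case 0
  show ?case
  proof (intro ballI impI)
    fix I assume I: "I \<in> idx n" "ord_idx n I = 0"
    then have z: "\<And>l. I l = 0" by (rule ord_zero)
    have "main I s = 0" unfolding main_def by (simp add: z)
    then show "ap I * \<iota> s - \<iota> s * ap I - main I s \<in> Q (0 - 1)" using ap_zero[OF I] by simp
  qed
next
  case (Suc d)
  note s = Suc.prems
  show ?case
  proof (intro ballI impI)
    fix I assume I: "I \<in> idx n" and dI: "ord_idx n I = Suc d"
    have "\<exists>l. I l > 0"
    proof (rule ccontr)
      assume "\<not> (\<exists>l. I l > 0)"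
      then have "ord_idx n I = 0" by (simp add: ord_idx_def)
      then show False using dI by simp
    qed
    then obtain l where "I l > 0" by blast
    then obtain j where j: "j \<in> {1..n}" "I j > 0" "\<forall>l>j. I l = 0" using top_idx[OF I] by blast
    define I0 where "I0 = I(j := I j - 1)"
    have I0: "I0 \<in> idx n" using I j by (simp add: I0_def idx_upd)
    have dI0: "ord_idx n I0 = d" using ord_dec[of j n I] j dI by (simp add: I0_def)
    have I0top: "\<forall>l>j. I0 l = 0" using j(3) by (simp add: I0_def)
    have II0: "I0(j := I0 j + 1) = I" using j(2) by (auto simp: I0_def)
    have apI: "ap I = \<alpha> j * ap I0" using ap_step[OF j(1) I0top] II0 by simp
    define E0 where "E0 = ap I0 * \<iota> s - \<iota> s * ap I0 - main I0 s"
    have E0: "E0 \<in> Q (d - 1)" using Suc.IH[OF s] I0 dI0 unfolding E0_def by blast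
    define g where "g m = of_nat (I0 m) * \<delta> m s" for m
    define K where "K m = I0(m := I0 m - 1)" for m
    have gP: "g m \<in> P" if "m \<in> {1..n}" for m using delta_P[OF that s] by (auto simp: g_def)
    have mainI0: "main I0 s = (\<Sum>m = 1..n. \<iota> (g m) * ap (K m))" unfolding main_def g_def K_def ..
        have cr: "\<iota> s * \<alpha> j = \<alpha> j * \<iota> s - \<iota> (\<delta> j s)" using comm_rel[OF j(1) s] by (simp add: algebra_simps)
    have step1: "ap I * \<iota> s - \<iota> s * ap I = \<alpha> j * (ap I0 * \<iota> s - \<iota> s * ap I0) + \<iota> (\<delta> j s) * ap I0"
    proof -
      have "ap I * \<iota> s - \<iota> s * ap I = \<alpha> j * ap I0 * \<iota> s - (\<iota> s * \<alpha> j) * ap I0" by (simp add: apI mult.assoc)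
      also have "\<dots> = \<alpha> j * ap I0 * \<iota> s - (\<alpha> j * \<iota> s - \<iota> (\<delta> j s)) * ap I0" by (simp only: cr)
      also have "\<dots> = \<alpha> j * (ap I0 * \<iota> s - \<iota> s * ap I0) + \<iota> (\<delta> j s) * ap I0" by (simp add: algebra_simps)
      finally show ?thesis .
    qed
        have step2: "\<alpha> j * main I0 s = (\<Sum>m = 1..n. \<iota> (g m) * ap (I(m := I m - 1)) + \<iota> (\<delta> j (g m)) * ap (K m))"
      unfolding mainI0 sum_distrib_left
    proof (rule sum.cong)
      fix m assume m: "m \<in> {1..n}"
      have "\<alpha> j * (\<iota> (g m) * ap (K m)) = (\<alpha> j * \<iota> (g m)) * ap (K m)" by (simp add: mult.assoc)
      also have "\<dots> = (\<iota> (g m) * \<alpha> j + \<iota> (\<delta> j (g m))) * ap (K m)" using comm_rel[OF j(1) gP[OF m]] by simp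
      also have "\<dots> = \<iota> (g m) * (\<alpha> j * ap (K m)) + \<iota> (\<delta> j (g m)) * ap (K m)" by (simp add: algebra_simps)
      also have "\<iota> (g m) * (\<alpha> j * ap (K m)) = \<iota> (g m) * ap (I(m := I m - 1))"
      proof (cases "I0 m = 0")
        case True then show ?thesis by (simp add: g_def)
      next
        case False
        have Ktop: "\<forall>l>j. K m l = 0" using I0top by (simp add: K_def)
        have "(K m)(j := K m j + 1) = I(m := I m - 1)"
          by (rule ext) (use False j(2) in \<open>auto simp: K_def I0_def\<close>)
        then show ?thesis using ap_step[OF j(1) Ktop] by simp
      qed
      finally show "\<alpha> j * (\<iota> (g m) * ap (K m)) = \<iota> (g m) * ap (I(m := I m - 1)) + \<iota> (\<delta> j (g m)) * ap (K m)" .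
    qed simp
        have step3: "main I s = (\<Sum>m = 1..n. \<iota> (g m) * ap (I(m := I m - 1))) + \<iota> (\<delta> j s) * ap I0"
    proof -
      have "main I s = (\<Sum>m = 1..n. \<iota> (g m) * ap (I(m := I m - 1)) + (if m = j then \<iota> (\<delta> j s) * ap I0 else 0))"
        unfolding main_def
      proof (rule sum.cong)
        fix m assume m: "m \<in> {1..n}"
        show "\<iota> (of_nat (I m) * \<delta> m s) * ap (I(m := I m - 1)) =
          \<iota> (g m) * ap (I(m := I m - 1)) + (if m = j then \<iota> (\<delta> j s) * ap I0 else 0)"
        proof (cases "m = j")
          case True
          have Ij: "I j = I0 j + 1" using j(2) by (simp add: I0_def)
          have "of_nat (I m) * \<delta> m s = g m + \<delta> j s" unfolding True Ij g_def by (simp add: distrib_right)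
          then have "\<iota> (of_nat (I m) * \<delta> m s) = \<iota> (g m) + \<iota> (\<delta> j s)" using iota_add gP[OF m] delta_P[OF j(1) s] by simp
          moreover have "I(m := I m - 1) = I0" using True by (simp add: I0_def)
          ultimately show ?thesis using True by (simp add: algebra_simps)
        next
          case False
          then show ?thesis by (simp add: g_def I0_def)
        qed
      qed simp
      also have "\<dots> = (\<Sum>m = 1..n. \<iota> (g m) * ap (I(m := I m - 1))) + \<iota> (\<delta> j s) * ap I0"
        using j(1) by (simp add: sum.distrib)
      finally show ?thesis .
    qed
    have eq: "ap I * \<iota> s - \<iota> s * ap I - main I s = \<alpha> j * E0 + (\<Sum>m = 1..n. \<iota> (\<delta> j (g m)) * ap (K m))"
    proof -
      have "ap I * \<iota> s - \<iota> s * ap I - main I s = \<alpha> j * E0 + \<alpha> j * main I0 s + \<iota> (\<delta> j s) * ap I0 - main I s"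
        unfolding step1 E0_def by (simp add: algebra_simps)
      also have "\<dots> = \<alpha> j * E0 + (\<Sum>m = 1..n. \<iota> (\<delta> j (g m)) * ap (K m))"
        unfolding step2 step3 by (simp add: sum.distrib)
      finally show ?thesis .
    qed
    have 1: "\<alpha> j * E0 \<in> Q d"
    proof (cases "d = 0")
      case True then have "E0 = 0" using E0 Q_0_eq by simp
      then show ?thesis by simp
    next
      case False then show ?thesis using alpha_Q_gen[OF j(1) E0] by simp
    qed
    have 2: "(\<Sum>m = 1..n. \<iota> (\<delta> j (g m)) * ap (K m)) \<in> Q d"
    proof (rule Q_sum)
      fix m assume m: "m \<in> {1..n}"
      show "\<iota> (\<delta> j (g m)) * ap (K m) \<in> Q d"
      proof (cases "I0 m = 0")
        case True then show ?thesis by (simp add: g_def delta_0[OF j(1)])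
      next
        case False
        have "ord_idx n (K m) + 1 = d" using ord_dec[of m n I0] m False dI0 by (simp add: K_def)
        then show ?thesis using Q_mono_in[OF delta_P[OF j(1) gP[OF m]], of "K m" d] I0 m
          by (simp add: K_def idx_upd)
      qed
    qed
    show "ap I * \<iota> s - \<iota> s * ap I - main I s \<in> Q (Suc d - 1)" using eq Q_add[OF 1 2] by simp
  qed
qed

end


context LR begin

lemma main_thm:
  assumes p: "p \<ge> 1" and fP: "\<forall>I\<in>idx n. ord_idx n I = p \<longrightarrow> f I \<in> P"
    and a: "a = (\<Sum>I \<in> {I \<in> idx n. ord_idx n I = p}. \<iota> (f I) * ap I)"
    and k: "k' \<in> {1..n}" and J: "J \<in> idx n" "ord_idx n J = p - 1"
  shows "rep (a * \<iota> (Var k') - \<iota> (Var k') * a) J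
           = (\<Sum>m = 1..n. of_nat (J m + 1) * \<delta> m (Var k') * f (J(m := J m + 1)))"
proof -
  define A where "A = {I \<in> idx n. ord_idx n I = p}"
  define x where "x = (Var k' :: 'k mpoly)"
  have finA: "finite A" unfolding A_def by (rule finite_ord_set)
  have xP: "x \<in> P" unfolding x_def by (rule polys_in_Var[OF k])
  have fA: "f I \<in> P" if "I \<in> A" for I using fP that by (auto simp: A_def)
  define E where "E I = ap I * \<iota> x - \<iota> x * ap I - main I x" for I
  have EQ: "E I \<in> Q (p - 1)" if "I \<in> A" for I using C[OF xP, of p] that unfolding A_def E_def by blast
  have "a * \<iota> x - \<iota> x * a = (\<Sum>I\<in>A. \<iota> (f I) * (ap I * \<iota> x - \<iota> x * ap I))"
  proof -
    have "a * \<iota> x = (\<Sum>I\<in>A. \<iota> (f I) * (ap I * \<iota> x))" unfolding a A_def[symmetric] sum_distrib_right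
      by (simp add: mult.assoc)
    moreover have "\<iota> x * a = (\<Sum>I\<in>A. \<iota> (f I) * (\<iota> x * ap I))" unfolding a A_def[symmetric] sum_distrib_left
    proof (rule sum.cong)
      fix I assume I: "I \<in> A"
      have "\<iota> x * \<iota> (f I) = \<iota> (f I) * \<iota> x"
        using iota_mult[OF xP fA[OF I]] iota_mult[OF fA[OF I] xP] by (simp add: mult.commute)
      then show "\<iota> x * (\<iota> (f I) * ap I) = \<iota> (f I) * (\<iota> x * ap I)" by (simp add: mult.assoc[symmetric])
    qed simp
    ultimately show ?thesis by (simp add: sum_subtractf right_diff_distrib)
  qed
  also have "\<dots> = (\<Sum>I\<in>A. \<iota> (f I) * main I x) + (\<Sum>I\<in>A. \<iota> (f I) * E I)"
    unfolding sum.distrib[symmetric] by (rule sum.cong) (simp_all add: E_def algebra_simps)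
  finally have decomp: "a * \<iota> x - \<iota> x * a = (\<Sum>I\<in>A. \<iota> (f I) * main I x) + (\<Sum>I\<in>A. \<iota> (f I) * E I)" .
  have r2: "rep (\<Sum>I\<in>A. \<iota> (f I) * E I) J = 0"
  proof -
    have "(\<Sum>I\<in>A. \<iota> (f I) * E I) \<in> Q (p - 1)" by (rule Q_sum) (use Q_lmult fA EQ in blast)
    then show ?thesis using J(2) by (simp add: Q_def)
  qed
  have repmain: "rep (main I x) J = (\<Sum>m = 1..n. if I(m := I m - 1) = J then of_nat (I m) * \<delta> m x else 0)"
    if I: "I \<in> A" for I
  proof -
    have "rep (main I x) J = (\<Sum>m = 1..n. rep (\<iota> (of_nat (I m) * \<delta> m x) * ap (I(m := I m - 1))) J)"
      unfolding main_def by (simp add: rep_sum)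
    also have "\<dots> = (\<Sum>m = 1..n. if I(m := I m - 1) = J then of_nat (I m) * \<delta> m x else 0)"
    proof (rule sum.cong)
      fix m assume m: "m \<in> {1..n}"
      have "of_nat (I m) * \<delta> m x \<in> P" using delta_P[OF m xP] by auto
      moreover have "I(m := I m - 1) \<in> idx n" using I m by (simp add: A_def idx_upd)
      ultimately show "rep (\<iota> (of_nat (I m) * \<delta> m x) * ap (I(m := I m - 1))) J =
          (if I(m := I m - 1) = J then of_nat (I m) * \<delta> m x else 0)" by (simp add: rep_mono)
    qed simp
    finally show ?thesis .
  qed
  have "rep (a * \<iota> x - \<iota> x * a) J = (\<Sum>I\<in>A. f I * rep (main I x) J)"
    unfolding decomp rep_add using r2 finA fA by (simp add: rep_sum rep_lmult)
  also have "\<dots> = (\<Sum>I\<in>A. \<Sum>m = 1..n. f I * (if I(m := I m - 1) = J then of_nat (I m) * \<delta> m x else 0))"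
    by (rule sum.cong) (simp_all add: repmain sum_distrib_left)
  also have "\<dots> = (\<Sum>m = 1..n. \<Sum>I\<in>A. f I * (if I(m := I m - 1) = J then of_nat (I m) * \<delta> m x else 0))"
    by (rule sum.swap)
  also have "\<dots> = (\<Sum>m = 1..n. of_nat (J m + 1) * \<delta> m x * f (J(m := J m + 1)))"
  proof (rule sum.cong)
    fix m assume m: "m \<in> {1..n}"
    define I0 where "I0 = J(m := J m + 1)"
    have I0A: "I0 \<in> A" using J m p ord_inc[OF m, of J] by (simp add: A_def I0_def idx_upd)
    have "(\<Sum>I\<in>A. f I * (if I(m := I m - 1) = J then of_nat (I m) * \<delta> m x else 0))
        = (\<Sum>I\<in>A. if I = I0 then f I0 * (of_nat (J m + 1) * \<delta> m x) else 0)"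
    proof (rule sum.cong)
      fix I assume "I \<in> A"
      show "f I * (if I(m := I m - 1) = J then of_nat (I m) * \<delta> m x else 0)
          = (if I = I0 then f I0 * (of_nat (J m + 1) * \<delta> m x) else 0)"
      proof (cases "I = I0")
        case True then show ?thesis by (simp add: I0_def)
      next
        case False
        show ?thesis
        proof (cases "I m = 0")
          case True then show ?thesis using False by simp
        next
          case nz: False
          have "I(m := I m - 1) \<noteq> J"
          proof
            assume "I(m := I m - 1) = J"
            then have "I = I0" using nz unfolding I0_def by (auto simp: fun_eq_iff split: if_splits)
            then show False using False by simp
          qed
          then show ?thesis using False by simp
        qed
      qed
    qed simp
    also have "\<dots> = f I0 * (of_nat (J m + 1) * \<delta> m x)" using I0A finA by (simp add: sum.delta)
    also have "\<dots> = of_nat (J m + 1) * \<delta> m x * f (J(m := J m + 1))" by (simp add: I0_def mult.commute)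
    finally show "(\<Sum>I\<in>A. f I * (if I(m := I m - 1) = J then of_nat (I m) * \<delta> m x else 0))
        = of_nat (J m + 1) * \<delta> m x * f (J(m := J m + 1))" .
  qed simp
  finally show ?thesis unfolding x_def .
qed

end

theorem lemma2p3:
  fixes \<iota> :: "'k::field_char_0 mpoly \<Rightarrow> 'u::ring_1"
    and \<alpha> :: "nat \<Rightarrow> 'u"
    and \<delta> :: "nat \<Rightarrow> 'k mpoly \<Rightarrow> 'k mpoly"
    and c :: "nat \<Rightarrow> nat \<Rightarrow> nat \<Rightarrow> 'k mpoly"
    and f :: "(nat \<Rightarrow> nat) \<Rightarrow> 'k mpoly"
    and n p k' :: nat and J :: "nat \<Rightarrow> nat" and a :: 'u
  assumes "n \<ge> 1"
    and "LR_envelope n \<iota> \<alpha> \<delta> c"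
    and "p \<ge> 1"
    and "\<forall>I \<in> idx n. ord_idx n I = p \<longrightarrow> f I \<in> polys_in n"
    and "a = (\<Sum>I \<in> {I \<in> idx n. ord_idx n I = p}. \<iota> (f I) * alpha_pow n \<alpha> I)"
    and "k' \<in> {1..n}"
    and "J \<in> idx n" and "ord_idx n J = p - 1"
  shows "ucoeff n \<iota> \<alpha> (a * \<iota> (Var k') - \<iota> (Var k') * a) J
           = (\<Sum>m = 1..n. of_nat (J m + 1) * \<delta> m (Var k') * f (J(m := J m + 1)))"
proof -
  interpret LR n \<iota> \<alpha> \<delta> c by (rule LR.intro) (rule assms(2))
  show ?thesis
    using main_thm[OF assms(3) assms(4) assms(5) assms(6) assms(7) assms(8)]
    unfolding ucoeff_def rep_def .
qed

end
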